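(* Fix a compact cube $K\subseteq\mathbb R^d$, $0<T<\infty$ and an initial state $\sigma\in\Sigma$. Then there is an almost surely finite random variable $M$ such that almost surely $\sigma(x,t)=\sigma^M(x,t)$ for all $(x,t)\in K\times[0,T]$, where for $m>0$, $$\sigma^m(x,t)=\sup_{y\le x,\ |y|_\infty\le m}\{\sigma(y)+\mathbf H((y,0),(x,t))\}.$$
   Context: Order: for $x,y\in\mathbb R^d$, $x\le y$ iff $x_i\le y_i$ for all $i$; $\mathbf 1=(1,\dots,1)$; $|x|_\infty=\max_i|x_i|$; $d\ge2$. $\mathbb Z^*=\mathbb Z\cup\{\pm\infty\}$. The state space $\Sigma$ is the set of functions $\sigma:\mathbb R^d\to\mathbb Z^*$ such that (i) $x\le y$ implies $\sigma(x)\le\sigma(y)$; (ii) for every cube $[-q\mathbf 1,q\mathbf 1]$ there are finite partitions $-q=s_i^0<\dots<s_i^{m_i}=q$ of each coordinate axis such that $\sigma$ is constant on each rectangle $\prod_i[s_i^{k_i},s_i^{k_i+1})$; (iii) for every $b\in\mathbb R^d$, $\lim_{M\to\infty}\sup\{|y|_\infty^{-d/(d+1)}\sigma(y):y\le b,|y|_\infty\ge M\}=-\infty$. A rate-one Poisson point process on $\mathbb R^d\times(0,\infty)$ is given; $\mathbf H((y,0),(x,t))$ is the maximal number of Poisson points on a strictly increasing chain (coordinatewise order in $\mathbb R^{d+1}$) in $\{(\eta,s):y<\eta\le x,0<s\le t\}$ (with $\mathbf H=0$ for $t=0$). The process is $\sigma(x,t)=\sup_{y\le x}\{\sigma(y)+\mathbf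 H((y,0),(x,t))\}$, $\sigma(x,0)=\sigma(x)$. *)

theory Defs
  imports "HOL-Probability.Probability"
begin

type_synonym 'd pt = "real^'d"

definition vle :: "real^'d \<Rightarrow> real^'d \<Rightarrow> bool" where
  "vle x y \<longleftrightarrow> (\<forall>i. x$i \<le> y$i)"

definition vlt :: "real^'d \<Rightarrow> real^'d \<Rightarrow> bool" where
  "vlt x y \<longleftrightarrow> (\<forall>i. x$i < y$i)"

definition supnorm :: "real^'d \<Rightarrow> real" where
  "supnorm x = Max (range (\<lambda>i. \<bar>x$i\<bar>))"

definition zstar :: "ereal set" where
  "zstar = {ereal (real_of_int k) | k. True} \<union> {\<infinity>, -\<infinity>}"

definition StateSpace :: "(real^'d \<Rightarrow> ereal) set" where
  "StateSpace = {\<sigma>.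
     (\<forall>x. \<sigma> x \<in> zstar) \<and>
     (\<forall>x y. vle x y \<longrightarrow> \<sigma> x \<le> \<sigma> y) \<and>
     (\<forall>q>0. \<exists>S :: 'd \<Rightarrow> real set.
        (\<forall>i. finite (S i) \<and> -q \<in> S i \<and> q \<in> S i \<and> S i \<subseteq> {-q..q}) \<and>
        (\<forall>x y. (\<forall>i. x$i \<in> {-q..<q} \<and> y$i \<in> {-q..<q}) \<and>
               (\<forall>i. \<forall>s\<in>S i. (s \<le> x$i \<longleftrightarrow> s \<le> y$i))
               \<longrightarrow> \<sigma> x = \<sigma> y)) \<and>
     (\<forall>b. ((\<lambda>M. Sup {ereal (supnorm y powr (- real CARD('d) / (real CARD('d) + 1))) * \<sigma> y
                     | y. vle y b \<and> supnorm y \<ge> M})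
            \<longlongrightarrow> -\<infinity>) at_top)}"

definition poisson_pp ::
  "'a measure \<Rightarrow> ('a \<Rightarrow> ((real^'d) \<times> real) set) \<Rightarrow> bool" where
  "poisson_pp M P \<longleftrightarrow>
     prob_space M \<and>
     (\<forall>\<omega>\<in>space M. P \<omega> \<subseteq> UNIV \<times> {0<..} \<and>
        (\<forall>B. bounded B \<longrightarrow> finite (P \<omega> \<inter> B))) \<and>
     (\<forall>B. B \<in> sets borel \<and> bounded B \<and> B \<subseteq> UNIV \<times> {0<..} \<longrightarrow>
        (\<lambda>\<omega>. card (P \<omega> \<inter> B)) \<in> measurable M (count_space UNIV) \<and>
        (\<forall>k. measure M {\<omega>\<in>space M. card (P \<omega> \<inter> B) = k}
              = (measure lborel B) ^ k / fact k * exp (- measure lborel B))) \<and>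
     (\<forall>(I :: nat set) Bs. finite I \<and> disjoint_family_on Bs I \<and>
        (\<forall>i\<in>I. Bs i \<in> sets borel \<and> bounded (Bs i) \<and> Bs i \<subseteq> UNIV \<times> {0<..}) \<longrightarrow>
        prob_space.indep_vars M (\<lambda>_. count_space UNIV)
          (\<lambda>i \<omega>. card (P \<omega> \<inter> Bs i)) I)"

definition strict_chain :: "((real^'d) \<times> real) set \<Rightarrow> bool" where
  "strict_chain C \<longleftrightarrow> (\<forall>p\<in>C. \<forall>q\<in>C. p \<noteq> q \<longrightarrow>
      (vlt (fst p) (fst q) \<and> snd p < snd q) \<or> (vlt (fst q) (fst p) \<and> snd q < snd p))"

text \<open>H((y,0),(x,t)) for the point configuration Pw.\<close>
definition Hlpp :: "((real^'d) \<times> real) set \<Rightarrow> real^'d \<Rightarrow> real^'d \<Rightarrow> real \<Rightarrow> ereal" where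
  "Hlpp Pw y x t = Sup {ereal (real (card C)) | C. finite C \<and> strict_chain C \<and>
      C \<subseteq> Pw \<inter> {(\<eta>, s). vlt y \<eta> \<and> vle \<eta> x \<and> 0 < s \<and> s \<le> t}}"

definition sigma_proc ::
  "(real^'d \<Rightarrow> ereal) \<Rightarrow> ((real^'d) \<times> real) set \<Rightarrow> real^'d \<Rightarrow> real \<Rightarrow> ereal" where
  "sigma_proc \<sigma> Pw x t = Sup {\<sigma> y + Hlpp Pw y x t | y. vle y x}"

definition sigma_trunc ::
  "real \<Rightarrow> (real^'d \<Rightarrow> ereal) \<Rightarrow> ((real^'d) \<times> real) set \<Rightarrow> real^'d \<Rightarrow> real \<Rightarrow> ereal" where
  "sigma_trunc m \<sigma> Pw x t = Sup {\<sigma> y + Hlpp Pw y x t | y. vle y x \<and> supnorm y \<le> m}"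

end

theory Submission
  imports Defs
begin


definition reg :: "real^'d \<Rightarrow> real^'d \<Rightarrow> real \<Rightarrow> ((real^'d) \<times> real) set" where
  "reg y x t = {(\<eta>, s). vlt y \<eta> \<and> vle \<eta> x \<and> 0 < s \<and> s \<le> t}"

lemma supnorm_ge: "\<bar>x$i\<bar> \<le> supnorm x"
  unfolding supnorm_def by (rule Max_ge) auto

lemma supnorm_nonneg: "0 \<le> supnorm x"
  using supnorm_ge[of x] abs_ge_zero order_trans by blast

lemma Hlpp_alt: "Hlpp Pw y x t = Sup ((\<lambda>C. ereal (real (card C))) ` {C. finite C \<and> strict_chain C \<and> C \<subseteq> Pw \<inter> reg y x t})"
  unfolding Hlpp_def reg_def by (rule arg_cong[where f=Sup]) auto

lemma reg_mono: "vle y' y \<Longrightarrow> vle x x' \<Longrightarrow> t \<le> t' \<Longrightarrow> reg y x t \<subseteq> reg y' x' t'"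
  unfolding reg_def vle_def vlt_def by (auto intro: order_le_less_trans order_trans)

lemma Hlpp_mono: "vle y' y \<Longrightarrow> vle x x' \<Longrightarrow> t \<le> t' \<Longrightarrow> Hlpp Pw y x t \<le> Hlpp Pw y' x' t'"
  unfolding Hlpp_alt
  apply (rule Sup_subset_mono)
  using reg_mono[of y' y x x' t t'] by blast

lemma Hlpp_nonneg: "0 \<le> Hlpp Pw y x t"
proof -
  have "ereal (real (card {})) \<le> Hlpp Pw y x t"
    unfolding Hlpp_alt by (rule Sup_upper, rule rev_image_eqI[of "{}"]) (auto simp: strict_chain_def)
  then show ?thesis by (simp add: zero_ereal_def)
qed

lemma reg_bounded: "bounded (reg y x t)"
proof -
  have "reg y x t \<subseteq> cbox y x \<times> cbox 0 t"
    unfolding reg_def vle_def vlt_def by (auto simp: mem_box_cart less_imp_le)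
  then show ?thesis using bounded_subset[OF bounded_Times[OF bounded_cbox bounded_cbox]] by blast
qed

lemma Hlpp_attained:
  assumes "finite (Pw \<inter> reg y x t)"
  shows "\<exists>C. finite C \<and> strict_chain C \<and> C \<subseteq> Pw \<inter> reg y x t \<and> Hlpp Pw y x t = ereal (real (card C))"
proof -
  let ?S = "{C. finite C \<and> strict_chain C \<and> C \<subseteq> Pw \<inter> reg y x t}"
  have fin: "finite ?S" using assms by (rule finite_subset[rotated, OF finite_Pow_iff[THEN iffD2]]) auto
  have ne: "{} \<in> ?S" by (auto simp: strict_chain_def)
  have "Hlpp Pw y x t = Max ((\<lambda>C. ereal (real (card C))) ` ?S)"
    unfolding Hlpp_alt using fin ne by (intro cSup_eq_Max) auto
  moreover have "Max ((\<lambda>C. ereal (real (card C))) ` ?S) \<in> (\<lambda>C. ereal (real (card C))) ` ?S"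
    using fin ne by (intro Max_in) auto
  ultimately show ?thesis by auto
qed

lemma Hlpp_le_card:
  assumes "finite (Pw \<inter> reg y x t)"
  shows "Hlpp Pw y x t \<le> ereal (real (card (Pw \<inter> reg y x t)))"
proof -
  obtain C where "C \<subseteq> Pw \<inter> reg y x t" "Hlpp Pw y x t = ereal (real (card C))"
    using Hlpp_attained[OF assms] by blast
  then show ?thesis using assms card_mono by fastforce
qed

lemma Hlpp_finite:
  assumes "\<forall>B. bounded B \<longrightarrow> finite (Pw \<inter> B)"
  shows "Hlpp Pw y x t \<noteq> \<infinity>" "Hlpp Pw y x t \<noteq> -\<infinity>"
proof -
  have "finite (Pw \<inter> reg y x t)" using assms reg_bounded by blast
  from Hlpp_le_card[OF this] Hlpp_nonneg[of Pw y x t]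
  show "Hlpp Pw y x t \<noteq> \<infinity>" "Hlpp Pw y x t \<noteq> -\<infinity>" by auto
qed

lemma StateSpaceD_all:
  fixes \<sigma> :: "real^'d::finite \<Rightarrow> ereal"
  assumes "\<sigma> \<in> StateSpace"
  shows "(\<forall>x. \<sigma> x \<in> zstar) \<and>
     (\<forall>x y. vle x y \<longrightarrow> \<sigma> x \<le> \<sigma> y) \<and>
     (\<forall>q>0. \<exists>S :: 'd \<Rightarrow> real set.
        (\<forall>i. finite (S i) \<and> -q \<in> S i \<and> q \<in> S i \<and> S i \<subseteq> {-q..q}) \<and>
        (\<forall>x y. (\<forall>i. x$i \<in> {-q..<q} \<and> y$i \<in> {-q..<q}) \<and>
               (\<forall>i. \<forall>s\<in>S i. (s \<le> x$i \<longleftrightarrow> s \<le> y$i))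
               \<longrightarrow> \<sigma> x = \<sigma> y)) \<and>
     (\<forall>b. ((\<lambda>M. Sup {ereal (supnorm y powr (- real CARD('d) / (real CARD('d) + 1))) * \<sigma> y
                     | y. vle y b \<and> supnorm y \<ge> M}) \<longlongrightarrow> -\<infinity>) at_top)"
  using assms unfolding StateSpace_def mem_Collect_eq .

lemma StateSpaceD_mono:
  fixes \<sigma> :: "real^'d::finite \<Rightarrow> ereal"
  assumes "\<sigma> \<in> StateSpace" "vle x y" shows "\<sigma> x \<le> \<sigma> y"
  using StateSpaceD_all[OF assms(1)] assms(2) by blast

lemma StateSpaceD_loc:
  fixes \<sigma> :: "real^'d::finite \<Rightarrow> ereal"
  assumes "\<sigma> \<in> StateSpace" "q > 0"
  shows "\<exists>S :: 'd \<Rightarrow> real set.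
        (\<forall>i. finite (S i) \<and> -q \<in> S i \<and> q \<in> S i \<and> S i \<subseteq> {-q..q}) \<and>
        (\<forall>x y. (\<forall>i. x$i \<in> {-q..<q} \<and> y$i \<in> {-q..<q}) \<and>
               (\<forall>i. \<forall>s\<in>S i. (s \<le> x$i \<longleftrightarrow> s \<le> y$i))
               \<longrightarrow> \<sigma> x = \<sigma> y)"
proof -
  have "\<forall>q>0. \<exists>S :: 'd \<Rightarrow> real set.
        (\<forall>i. finite (S i) \<and> -q \<in> S i \<and> q \<in> S i \<and> S i \<subseteq> {-q..q}) \<and>
        (\<forall>x y. (\<forall>i. x$i \<in> {-q..<q} \<and> y$i \<in> {-q..<q}) \<and>
               (\<forall>i. \<forall>s\<in>S i. (s \<le> x$i \<longleftrightarrow> s \<le> y$i))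
               \<longrightarrow> \<sigma> x = \<sigma> y)" using StateSpaceD_all[OF assms(1)] by (elim conjE)
  then show ?thesis using assms(2) by (elim allE[of _ q]) (erule impE)
qed

lemma StateSpaceD_lim:
  fixes \<sigma> :: "real^'d::finite \<Rightarrow> ereal"
  assumes "\<sigma> \<in> StateSpace"
  shows "((\<lambda>M. Sup {ereal (supnorm y powr (- real CARD('d) / (real CARD('d) + 1))) * \<sigma> y
                     | y. vle y b \<and> supnorm y \<ge> M}) \<longlongrightarrow> -\<infinity>) at_top"
proof -
  have "\<forall>b. ((\<lambda>M. Sup {ereal (supnorm y powr (- real CARD('d) / (real CARD('d) + 1))) * \<sigma> y
                     | y. vle y b \<and> supnorm y \<ge> M}) \<longlongrightarrow> -\<infinity>) at_top"
    using StateSpaceD_all[OF assms(1)] by (elim conjE)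
  then show ?thesis by (rule spec)
qed

lemma finite_vals:
  fixes \<sigma> :: "real^'d \<Rightarrow> ereal"
  assumes "\<sigma> \<in> StateSpace" "L \<ge> 0"
  shows "finite (\<sigma> ` {x. \<forall>i. c$i \<le> x$i \<and> x$i \<le> c$i + L})"
proof -
  define cube where "cube = {x. \<forall>i. c$i \<le> x$i \<and> x$i \<le> c$i + L}"
  define q where "q = supnorm c + L + 1"
  have qpos: "q > 0" unfolding q_def using supnorm_nonneg[of c] assms(2) by linarith
  obtain S :: "'d \<Rightarrow> real set" where S: "\<forall>i. finite (S i)"
    and Seq: "\<And>x y. (\<forall>i. x$i \<in> {-q..<q} \<and> y$i \<in> {-q..<q}) \<and>
               (\<forall>i. \<forall>s\<in>S i. (s \<le> x$i \<longleftrightarrow> s \<le> y$i)) \<Longrightarrow> \<sigma> x = \<sigma> y"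
    using StateSpaceD_loc[OF assms(1) qpos] by metis
  have incube: "x$i \<in> {-q..<q}" if "x \<in> cube" for x i
  proof -
    have "\<bar>c$i\<bar> \<le> supnorm c" by (rule supnorm_ge)
    moreover have "c$i \<le> x$i" "x$i \<le> c$i + L" using that unfolding cube_def by auto
    ultimately show ?thesis unfolding q_def by (auto simp: abs_le_iff)
  qed
  define pat where "pat x = (\<lambda>i. {s\<in>S i. s \<le> x$i})" for x :: "real^'d"
  define rep where "rep \<pi> = (SOME x. x \<in> cube \<and> pat x = \<pi>)" for \<pi>
  have "\<sigma> ` cube \<subseteq> (\<lambda>\<pi>. \<sigma> (rep \<pi>)) ` (PiE UNIV (\<lambda>i. Pow (S i)))"
  proof
    fix v assume "v \<in> \<sigma> ` cube"
    then obtain x where x: "x \<in> cube" "v = \<sigma> x" by blast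
    have ex: "\<exists>x'. x' \<in> cube \<and> pat x' = pat x" using x by blast
    have r: "rep (pat x) \<in> cube \<and> pat (rep (pat x)) = pat x"
      unfolding rep_def by (rule someI_ex[OF ex])
    have "\<sigma> (rep (pat x)) = \<sigma> x"
    proof (rule Seq, intro conjI allI ballI)
      fix i show "rep (pat x) $ i \<in> {-q..<q}" "x $ i \<in> {-q..<q}" using incube r x by auto
    next
      fix i s assume "s \<in> S i"
      have "{s\<in>S i. s \<le> rep (pat x) $ i} = {s\<in>S i. s \<le> x $ i}"
        using fun_cong[OF conjunct2[OF r], of i] unfolding pat_def .
      then show "(s \<le> rep (pat x) $ i) = (s \<le> x $ i)" using \<open>s \<in> S i\<close> by blast
    qed
    moreover have "pat x \<in> PiE UNIV (\<lambda>i. Pow (S i))" unfolding pat_def by auto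
    ultimately show "v \<in> (\<lambda>\<pi>. \<sigma> (rep \<pi>)) ` (PiE UNIV (\<lambda>i. Pow (S i)))"
      using x by (metis image_eqI)
  qed
  moreover have "finite (PiE UNIV (\<lambda>i. Pow (S i)))" using S by (intro finite_PiE) auto
  ultimately have "finite (\<sigma> ` cube)" using finite_subset finite_imageI by metis
  then show ?thesis unfolding cube_def .
qed

lemma growth:
  fixes \<sigma> :: "real^'d \<Rightarrow> ereal"
  assumes "\<sigma> \<in> StateSpace"
  shows "\<exists>M\<ge>1. \<forall>y. vle y b \<and> supnorm y \<ge> M \<longrightarrow>
     \<sigma> y < ereal (- A * supnorm y powr (real CARD('d) / (real CARD('d) + 1)))"
proof -
  let ?a = "real CARD('d) / (real CARD('d) + 1)"
  have "\<forall>\<^sub>F M in at_top. Sup {ereal (supnorm y powr (- real CARD('d) / (real CARD('d) + 1))) * \<sigma> y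
                     | y. vle y b \<and> supnorm y \<ge> M} < ereal (-A)"
    using StateSpaceD_lim[OF assms, of b] unfolding tendsto_MInfty by blast
  then obtain M0 where M0: "\<And>M. M \<ge> M0 \<Longrightarrow> Sup {ereal (supnorm y powr (- real CARD('d) / (real CARD('d) + 1))) * \<sigma> y
                     | y. vle y b \<and> supnorm y \<ge> M} < ereal (-A)"
    unfolding eventually_at_top_linorder by blast
  define M where "M = max M0 1"
  have "\<sigma> y < ereal (- A * supnorm y powr ?a)" if y: "vle y b" "supnorm y \<ge> M" for y
  proof -
    have "ereal (supnorm y powr (- real CARD('d) / (real CARD('d) + 1))) * \<sigma> y
       \<le> Sup {ereal (supnorm y powr (- real CARD('d) / (real CARD('d) + 1))) * \<sigma> y
                     | y. vle y b \<and> supnorm y \<ge> M}"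
      by (rule Sup_upper) (use y in blast)
    also have "\<dots> < ereal (-A)" using M0[of M] unfolding M_def by auto
    finally have lt: "ereal (supnorm y powr (- real CARD('d) / (real CARD('d) + 1))) * \<sigma> y < ereal (-A)" .
    have r1: "supnorm y \<ge> 1" using y(2) unfolding M_def by auto
    define r where "r = supnorm y"
    have rp: "r > 0" using r1 r_def by auto
    have inv: "r powr (- real CARD('d) / (real CARD('d) + 1)) * r powr ?a = 1"
      using rp by (simp add: powr_add[symmetric])
    have pp: "r powr (- real CARD('d) / (real CARD('d) + 1)) > 0" using rp by simp
    show ?thesis
    proof (cases "\<sigma> y")
      case (real v)
      have "r powr (- real CARD('d) / (real CARD('d) + 1)) * v < -A" using lt real r_def by simp
      then have "r powr ?a * (r powr (- real CARD('d) / (real CARD('d) + 1)) * v) < r powr ?a * (-A)"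
        using rp by (intro mult_strict_left_mono) auto
      moreover have "r powr ?a * (r powr (- real CARD('d) / (real CARD('d) + 1)) * v) = v"
        using inv by (metis mult.assoc mult.commute mult_1)
      ultimately have "v < r powr ?a * (-A)" by linarith
      then have "v < - A * r powr ?a" by (simp only: mult.commute)
      then show ?thesis unfolding real r_def by (simp only: less_ereal.simps)
    next
      case PInf 
      have "ereal (supnorm y powr (- real CARD('d) / (real CARD('d) + 1))) * \<sigma> y = \<infinity>"
        using pp unfolding PInf r_def by (simp only: ereal_mult_infty) simp
      then show ?thesis using lt by simp
    next
      case MInf then show ?thesis by simp
    qed
  qed
  then show ?thesis unfolding M_def by (intro exI[of _ "max M0 1"]) auto
qed

definition upc :: "real^'d \<Rightarrow> real \<Rightarrow> real^'d" where "upc c L = (\<chi> i. c$i + L)"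
definition beta :: "real^'d \<Rightarrow> nat \<Rightarrow> real^'d" where "beta b n = (\<chi> i. b$i - real n)"

lemma supnorm_le: "(\<And>i. \<bar>x$i\<bar> \<le> K) \<Longrightarrow> supnorm x \<le> K"
  unfolding supnorm_def by (subst Max_le_iff) auto

lemma det_main:
  fixes \<sigma> :: "real^'d \<Rightarrow> ereal" and Cst :: real
  assumes sig: "\<sigma> \<in> StateSpace" and L: "L \<ge> 0" and Cst: "Cst \<ge> 0"
  shows "\<exists>R1>0. \<forall>Pw N0 R. (\<forall>B. bounded B \<longrightarrow> finite (Pw \<inter> B)) \<and>
     (\<forall>n\<ge>N0. Hlpp Pw (beta (upc c L) n) (upc c L) T \<le> ereal (Cst * real n powr (real CARD('d) / (real CARD('d) + 1)) + 1))
     \<and> R \<ge> R1 \<and> R \<ge> real N0 \<longrightarrow>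
     (\<forall>x t. (\<forall>i. c$i \<le> x$i \<and> x$i \<le> c$i + L) \<and> 0 \<le> t \<and> t \<le> T \<longrightarrow>
                 sigma_proc \<sigma> Pw x t = sigma_trunc R \<sigma> Pw x t)"
proof -
  define a where "a = real CARD('d) / (real CARD('d) + 1)"
  have a0: "0 < a" "a \<le> 1" unfolding a_def by auto
  define b where "b = upc c L"
  define cube where "cube = {x. \<forall>i. c$i \<le> x$i \<and> x$i \<le> c$i + L}"
  have fin: "finite (\<sigma> ` cube)" unfolding cube_def by (rule finite_vals[OF sig L])
  define FV where "FV = real_of_ereal ` (\<sigma> ` cube \<inter> {v. \<bar>v\<bar> \<noteq> \<infinity>})"
  have finFV: "finite FV" unfolding FV_def using fin by auto
  define m0 where "m0 = Min (insert 0 FV)"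
  have m0: "ereal m0 \<le> \<sigma> x" if "x \<in> cube" "\<bar>\<sigma> x\<bar> \<noteq> \<infinity>" for x
  proof -
    have "real_of_ereal (\<sigma> x) \<in> FV" unfolding FV_def using that by auto
    then have "m0 \<le> real_of_ereal (\<sigma> x)" unfolding m0_def using finFV by auto
    then show ?thesis using that(2) by (cases "\<sigma> x") auto
  qed
  define A where "A = 2 * Cst + \<bar>m0\<bar> + 1"
  obtain M where M1: "M \<ge> 1" and Mg: "\<And>y. vle y b \<Longrightarrow> supnorm y \<ge> M \<Longrightarrow> \<sigma> y < ereal (- A * supnorm y powr a)"
    using growth[OF sig, of b A] unfolding a_def by blast
  define R1 where "R1 = M + supnorm b + supnorm c + 1"
  have sb0: "supnorm b \<ge> 0" "supnorm c \<ge> 0" by (rule supnorm_nonneg)+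
  have R1pos: "R1 > 0" unfolding R1_def using M1 sb0 by linarith
  have cube_norm: "supnorm x \<le> R1" if "x \<in> cube" for x
  proof -
    have "\<bar>x$i\<bar> \<le> supnorm b + supnorm c" for i
    proof -
      have "\<bar>c$i\<bar> \<le> supnorm c" "\<bar>b$i\<bar> \<le> supnorm b" by (rule supnorm_ge)+
      moreover have "c$i \<le> x$i" "x$i \<le> b$i" using that unfolding cube_def b_def upc_def by auto
      ultimately show ?thesis by linarith
    qed
    then have "supnorm x \<le> supnorm b + supnorm c" by (rule supnorm_le)
    then show ?thesis unfolding R1_def using M1 by linarith
  qed
  have cube_b: "vle x b" if "x \<in> cube" for x
    using that unfolding cube_def b_def upc_def vle_def by auto
  have main: "sigma_proc \<sigma> Pw x t = sigma_trunc R \<sigma> Pw x t"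
    if lf: "\<forall>B. bounded B \<longrightarrow> finite (Pw \<inter> B)"
      and HN: "\<forall>n\<ge>N0. Hlpp Pw (beta b n) b T \<le> ereal (Cst * real n powr a + 1)"
      and R: "R \<ge> R1" "R \<ge> real N0" and x: "x \<in> cube" and t: "0 \<le> t" "t \<le> T"
    for Pw N0 R x t
  proof (rule antisym)
    show "sigma_trunc R \<sigma> Pw x t \<le> sigma_proc \<sigma> Pw x t"
      unfolding sigma_trunc_def sigma_proc_def by (rule Sup_subset_mono) blast
  next
    let ?tr = "sigma_trunc R \<sigma> Pw x t"
    show "sigma_proc \<sigma> Pw x t \<le> ?tr"
      unfolding sigma_proc_def
    proof (rule Sup_least)
      fix z assume "z \<in> {\<sigma> y + Hlpp Pw y x t |y. vle y x}"
      then obtain y where z: "z = \<sigma> y + Hlpp Pw y x t" and yx: "vle y x" by blast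
      have Hfin: "Hlpp Pw y x t \<noteq> \<infinity>" "Hlpp Pw y x t \<noteq> -\<infinity>" using Hlpp_finite[OF lf] by auto
      show "z \<le> ?tr"
      proof (cases "supnorm y \<le> R")
        case True
        then show ?thesis unfolding z sigma_trunc_def by (intro Sup_upper) (use yx in blast)
      next
        case big: False
        have sy: "\<sigma> y \<le> \<sigma> x" by (rule StateSpaceD_mono[OF sig yx])
        show ?thesis
        proof (cases "\<sigma> x = -\<infinity>")
          case True
          then have "\<sigma> y = -\<infinity>" using sy by auto
          then show ?thesis unfolding z using Hfin by (cases "Hlpp Pw y x t") auto
        next
          case sxm: False
          have xx: "vle x x" unfolding vle_def by auto
          have "\<sigma> x = \<sigma> x + 0" by simp
          also have "\<dots> \<le> \<sigma> x + Hlpp Pw x x t" by (rule add_left_mono[OF Hlpp_nonneg])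
          also have "\<dots> \<le> ?tr" unfolding sigma_trunc_def
            by (intro Sup_upper) (use xx cube_norm[OF x] R in force)
          finally have sxtr: "\<sigma> x \<le> ?tr" .
          have "z \<le> \<sigma> x"
          proof (cases "\<sigma> x = \<infinity>")
            case True then show ?thesis by simp
          next
            case False
            then have m0x: "ereal m0 \<le> \<sigma> x" using m0[OF x] sxm by auto
            define r where "r = supnorm y"
            have rR: "r > R" using big r_def by simp
            have r1: "r \<ge> 1" "r \<ge> M" "r \<ge> supnorm b + 1" using rR R(1) M1 sb0 unfolding R1_def by linarith+
            have yb: "vle y b" using yx cube_b[OF x] unfolding vle_def by (meson order_trans)
            have sgy: "\<sigma> y < ereal (- A * r powr a)" using Mg[OF yb] r1 r_def by simp
            define n where "n = nat \<lceil>r + supnorm b\<rceil>"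
            have nge: "real n \<ge> r + supnorm b" unfolding n_def by linarith
            have nle: "real n \<le> 2 * r" unfolding n_def using r1 by linarith
            have nN0: "n \<ge> N0" using nge rR R(2) sb0 by linarith
            have by_: "vle (beta b n) y" unfolding vle_def beta_def
            proof
              fix i
              have "\<bar>y$i\<bar> \<le> r" "\<bar>b$i\<bar> \<le> supnorm b" unfolding r_def by (rule supnorm_ge)+
              then show "(\<chi> i. b $ i - real n) $ i \<le> y $ i" using nge by simp
            qed
            have "Hlpp Pw y x t \<le> Hlpp Pw (beta b n) b T"
              by (rule Hlpp_mono[OF by_ cube_b[OF x] t(2)])
            also have "\<dots> \<le> ereal (Cst * real n powr a + 1)" using HN nN0 by blast
            also have "\<dots> \<le> ereal (2 * Cst * r powr a + 1)"
            proof -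
              have "real n powr a \<le> (2 * r) powr a" using nle a0 by (intro powr_mono2) auto
              also have "\<dots> = 2 powr a * r powr a" using r1 by (simp add: powr_mult)
              also have "\<dots> \<le> 2 * r powr a"
              proof -
                have "2 powr a \<le> 2 powr 1" using a0 by (intro powr_mono) auto
                then show ?thesis by (intro mult_right_mono) auto
              qed
              finally have "real n powr a \<le> 2 * r powr a" .
              then have "Cst * real n powr a \<le> Cst * (2 * r powr a)" using Cst by (rule mult_left_mono)
              then show ?thesis by simp
            qed
            finally have Hle: "Hlpp Pw y x t \<le> ereal (2 * Cst * r powr a + 1)" .
            have ra1: "r powr a \<ge> 1" using r1 a0 by (simp add: ge_one_powr_ge_zero)
            have "z \<le> ereal m0"
            proof (cases "\<sigma> y")
              case MInf then show ?thesis unfolding z using Hfin by (cases "Hlpp Pw y x t") auto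
            next
              case PInf then show ?thesis using sgy by simp
            next
              case (real v)
              obtain h where h: "Hlpp Pw y x t = ereal h" using Hfin by (cases "Hlpp Pw y x t") auto
              have hle: "h \<le> 2 * Cst * r powr a + 1" using Hle h by simp
              have vle': "v < - A * r powr a" using sgy real by simp
              have "v + h \<le> m0"
              proof -
                have "- A * r powr a + (2 * Cst * r powr a + 1) = - (\<bar>m0\<bar> + 1) * r powr a + 1"
                  unfolding A_def by algebra
                also have "\<dots> \<le> - (\<bar>m0\<bar> + 1) * 1 + 1"
                proof (intro add_right_mono)
                  have "(\<bar>m0\<bar> + 1) * 1 \<le> (\<bar>m0\<bar> + 1) * r powr a"
                    using ra1 by (intro mult_left_mono) auto
                  then show "- (\<bar>m0\<bar> + 1) * r powr a \<le> - (\<bar>m0\<bar> + 1) * 1"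
                    by (simp only: mult_minus_left neg_le_iff_le)
                qed
                also have "\<dots> \<le> m0" by simp
                finally show ?thesis using hle vle' by linarith
              qed
              then show ?thesis unfolding z real h by simp
            qed
            then show ?thesis using m0x by (rule order_trans)
          qed
          then show ?thesis using sxtr by (rule order_trans)
        qed
      qed
    qed
  qed
  show ?thesis
    apply (rule exI[of _ R1])
    using R1pos main unfolding a_def b_def cube_def by blast
qed

lemma poisson_tail:
  assumes pp: "poisson_pp M P" and B: "B \<in> sets borel" "bounded B" "B \<subseteq> UNIV \<times> {0<..}"
  shows "measure M {\<omega>\<in>space M. k \<le> card (P \<omega> \<inter> B)} \<le> (measure lborel B)^k / fact k"
proof -
  interpret prob_space M using pp unfolding poisson_pp_def by blast
  define X where "X \<omega> = card (P \<omega> \<inter> B)" for \<omega>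
  define lam where "lam = measure lborel B"
  have lam0: "lam \<ge> 0" unfolding lam_def by simp
  have Xm: "X \<in> measurable M (count_space UNIV)"
    using pp B unfolding poisson_pp_def X_def by blast
  have pk: "measure M {\<omega>\<in>space M. X \<omega> = j} = lam ^ j / fact j * exp (- lam)" for j
    using pp B unfolding poisson_pp_def X_def lam_def by blast
  have evs: "{\<omega>\<in>space M. X \<omega> \<in> S} \<in> sets M" for S
  proof -
    have "X -` S \<inter> space M \<in> sets M" using Xm by (rule measurable_sets) simp
    moreover have "X -` S \<inter> space M = {\<omega>\<in>space M. X \<omega> \<in> S}" by auto
    ultimately show ?thesis by simp
  qed
  have ev1: "{\<omega>\<in>space M. X \<omega> = j} \<in> sets M" for j using evs[of "{j}"] by simp
  have ev2: "{\<omega>\<in>space M. X \<omega> < j} \<in> sets M" for j using evs[of "{..<j}"] by simp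
  have lt: "measure M {\<omega>\<in>space M. X \<omega> < k} = (\<Sum>j<k. lam ^ j / fact j * exp (- lam))" for k
  proof (induction k)
    case 0 then show ?case by simp
  next
    case (Suc k)
    have "{\<omega>\<in>space M. X \<omega> < Suc k} = {\<omega>\<in>space M. X \<omega> < k} \<union> {\<omega>\<in>space M. X \<omega> = k}" by auto
    then have "measure M {\<omega>\<in>space M. X \<omega> < Suc k} = measure M {\<omega>\<in>space M. X \<omega> < k} + measure M {\<omega>\<in>space M. X \<omega> = k}"
      using ev1 ev2 by (simp add: finite_measure_Union disjoint_iff)
    then show ?case using Suc pk by simp
  qed
  have "{\<omega>\<in>space M. k \<le> X \<omega>} = space M - {\<omega>\<in>space M. X \<omega> < k}" by auto
  then have "measure M {\<omega>\<in>space M. k \<le> X \<omega>} = 1 - (\<Sum>j<k. lam ^ j / fact j * exp (- lam))"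
    using prob_compl[OF ev2[of k]] lt by simp
  also have "\<dots> \<le> lam ^ k / fact k"
  proof -
    obtain t where t: "\<bar>t\<bar> \<le> \<bar>lam\<bar>" "exp lam = (\<Sum>m<k. lam ^ m / fact m) + exp t / fact k * lam ^ k"
      using Maclaurin_exp_le[of lam k] by blast
    have "(\<Sum>j<k. lam ^ j / fact j * exp (- lam)) = exp (- lam) * (\<Sum>j<k. lam ^ j / fact j)"
      by (simp add: sum_distrib_left mult.commute)
    also have "\<dots> = exp (-lam) * (exp lam - exp t / fact k * lam ^ k)" using t(2) by simp
    also have "\<dots> = 1 - exp (t - lam) * (lam ^ k / fact k)"
      by (simp add: algebra_simps exp_minus_inverse exp_diff exp_minus field_simps)
    finally have eq: "1 - (\<Sum>j<k. lam ^ j / fact j * exp (- lam)) = exp (t - lam) * (lam ^ k / fact k)" by simp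
    have "exp (t - lam) \<le> 1" using t(1) lam0 by simp
    moreover have "lam ^ k / fact k \<ge> 0" using lam0 by simp
    ultimately show ?thesis unfolding eq using mult_right_mono[of "exp (t - lam)" 1 "lam ^ k / fact k"] by simp
  qed
  finally show ?thesis unfolding X_def lam_def .
qed

definition Mon :: "nat \<Rightarrow> (nat \<Rightarrow> int) set" where
  "Mon k = {f. (\<forall>j<k. 1 \<le> f j \<and> f j \<le> int k) \<and> (\<forall>j j'. j \<le> j' \<and> j' < k \<longrightarrow> f j \<le> f j') \<and> (\<forall>j\<ge>k. f j = undefined)}"

lemma Mon_sub: "Mon k \<subseteq> PiE {..<k} (\<lambda>_. {1..int k})"
  unfolding Mon_def PiE_def extensional_def by auto

lemma Mon_finite: "finite (Mon k)"
  using Mon_sub by (rule finite_subset) (intro finite_PiE; simp)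

lemma strict_image_eq:
  fixes u v :: "nat \<Rightarrow> int"
  assumes u: "\<And>i j. i < j \<Longrightarrow> j < k \<Longrightarrow> u i < u j"
    and v: "\<And>i j. i < j \<Longrightarrow> j < k \<Longrightarrow> v i < v j"
    and eq: "u ` {..<k} = v ` {..<k}"
  shows "j < k \<Longrightarrow> u j = v j"
proof (induction j rule: less_induct)
  case (less j)
  have "u j \<in> v ` {..<k}" using eq less.prems by auto
  then obtain j' where j': "j' < k" "u j = v j'" by auto
  have "\<not> j' < j"
  proof
    assume "j' < j"
    then have "u j' = v j'" using less.IH j' by auto
    moreover have "u j' < u j" using u[OF \<open>j' < j\<close> less.prems] .
    ultimately show False using j' by simp
  qed
  then have "v j \<le> u j" using j' v[of j j'] by (cases "j = j'") auto
  have "v j \<in> u ` {..<k}" using eq less.prems by auto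
  then obtain j'' where j'': "j'' < k" "v j = u j''" by auto
  have "\<not> j'' < j"
  proof
    assume "j'' < j"
    then have "u j'' = v j''" using less.IH j'' by auto
    moreover have "v j'' < v j" using v[OF \<open>j'' < j\<close> less.prems] .
    ultimately show False using j'' by simp
  qed
  then have "u j \<le> v j" using j'' u[of j j''] by (cases "j = j''") auto
  then show ?case using \<open>v j \<le> u j\<close> by simp
qed

lemma Mon_card: "card (Mon k) \<le> 4 ^ k"
proof -
  define enc where "enc f = (\<lambda>j. f j + int j) ` {..<k}" for f :: "nat \<Rightarrow> int"
  have sm: "f i + int i < f j + int j" if "f \<in> Mon k" "i < j" "j < k" for f i j
  proof -
    have "f i \<le> f j" using that unfolding Mon_def by auto
    then show ?thesis using that by linarith
  qed
  have inj: "inj_on enc (Mon k)"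
  proof (rule inj_onI)
    fix f g assume f: "f \<in> Mon k" and g: "g \<in> Mon k" and e: "enc f = enc g"
    have "f j + int j = g j + int j" if "j < k" for j
      using strict_image_eq[of k "\<lambda>j. f j + int j" "\<lambda>j. g j + int j" j] sm[OF f] sm[OF g] e that
      unfolding enc_def by blast
    note fg = this
    show "f = g"
    proof
      fix j show "f j = g j"
      proof (cases "j < k")
        case True then show ?thesis using fg by simp
      next
        case False then show ?thesis using f g unfolding Mon_def by simp
      qed
    qed
  qed
  have img: "enc ` Mon k \<subseteq> Pow {1..2 * int k}"
  proof
    fix S assume "S \<in> enc ` Mon k"
    then obtain f where f: "f \<in> Mon k" "S = enc f" by auto
    have "f j + int j \<in> {1..2 * int k}" if "j < k" for j
      using f(1) that unfolding Mon_def by auto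
    then show "S \<in> Pow {1..2 * int k}" unfolding f enc_def by auto
  qed
  have "card (Mon k) = card (enc ` Mon k)" using inj by (simp add: card_image)
  also have "\<dots> \<le> card (Pow {1..2 * int k})" using img by (intro card_mono) auto
  also have "\<dots> = 2 ^ (2 * k)" by (simp add: card_Pow)
  also have "\<dots> = 4 ^ k" by (simp add: power_mult)
  finally show ?thesis .
qed

definition cell :: "real^'d \<Rightarrow> nat \<Rightarrow> real \<Rightarrow> nat \<Rightarrow> ('d \<Rightarrow> int) \<Rightarrow> int \<Rightarrow> ((real^'d) \<times> real) set" where
  "cell b n T k g h = {(\<eta>, s). (\<forall>i. b$i - real n + (of_int (g i) - 1) * real n / real k < \<eta>$i \<and>
        \<eta>$i \<le> b$i - real n + of_int (g i) * real n / real k) \<and>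
        (of_int h - 1) * T / real k < s \<and> s \<le> of_int h * T / real k}"

lemma cell_borel: "cell b n T k g h \<in> sets borel"
proof -
  have [measurable]: "(\<lambda>w::((real^'d)\<times>real). fst w $ i) \<in> borel_measurable borel" for i
    by (intro borel_measurable_continuous_onI continuous_intros)
  have [measurable]: "(\<lambda>w::((real^'d)\<times>real). snd w) \<in> borel_measurable borel"
    by (intro borel_measurable_continuous_onI continuous_intros)
  have "cell b n T k g h = {p \<in> space borel. (\<forall>i. b$i - real n + (of_int (g i) - 1) * real n / real k < fst p $ i \<and>
        fst p $ i \<le> b$i - real n + of_int (g i) * real n / real k) \<and>
        (of_int h - 1) * T / real k < snd p \<and> snd p \<le> of_int h * T / real k}"
    unfolding cell_def by auto
  also have "\<dots> \<in> sets borel" by measurable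
  finally show ?thesis .
qed

lemma cell_sub: "cell b n T k g h \<subseteq> cbox ((\<chi> i. b$i - real n + (of_int (g i) - 1) * real n / real k), (of_int h - 1) * T / real k)
   ((\<chi> i. b$i - real n + of_int (g i) * real n / real k), of_int h * T / real k)"
  unfolding cell_def cbox_Pair_eq by (auto simp: mem_box_cart less_imp_le)

lemma cell_bounded: "bounded (cell b n T k g h)"
  by (rule bounded_subset[OF bounded_cbox cell_sub])

lemma cell_pos: "h \<ge> 1 \<Longrightarrow> T \<ge> 0 \<Longrightarrow> cell b n T k g h \<subseteq> UNIV \<times> {0<..}"
proof
  fix p assume "h \<ge> 1" "T \<ge> 0" and p: "p \<in> cell b n T k g h"
  then have "(of_int h - 1) * T / real k \<ge> 0" by (intro divide_nonneg_nonneg mult_nonneg_nonneg) auto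
  moreover have "(of_int h - 1) * T / real k < snd p" using p unfolding cell_def by (auto simp: case_prod_beta)
  ultimately have "snd p > 0" by linarith
  then show "p \<in> UNIV \<times> {0<..}" by (simp add: mem_Times_iff)
qed

lemma cell_measure:
  fixes b :: "real^'d"
  assumes "k > 0" "T \<ge> 0"
  shows "measure lborel (cell b n T k g h) \<le> (real n / real k) ^ CARD('d) * (T / real k)"
proof -
  let ?lo = "(\<chi> i. b$i - real n + (of_int (g i) - 1) * real n / real k)"
  let ?hi = "(\<chi> i. b$i - real n + of_int (g i) * real n / real k)"
  have m1: "measure lborel (cell b n T k g h) \<le> measure lborel (cbox (?lo, (of_int h - 1) * T / real k) (?hi, of_int h * T / real k))"
    by (rule measure_mono_fmeasurable[OF cell_sub]) (auto simp: cell_borel)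
  have m2: "measure lborel (cbox (?lo, (of_int h - 1) * T / real k) (?hi, of_int h * T / real k)) = measure lborel (cbox ?lo ?hi) * measure lborel (cbox ((of_int h - 1) * T / real k) (of_int h * T / real k))"
    by (rule content_Pair)
  have "(of_int (g i) - 1) * real n / real k \<le> of_int (g i) * real n / real k" for i
    by (intro divide_right_mono mult_right_mono) auto
  then have ne: "?lo \<in> cbox ?lo ?hi" unfolding mem_box_cart by simp
  have m3: "measure lborel (cbox ?lo ?hi) = (\<Prod>i\<in>UNIV. ?hi $ i - ?lo $ i)"
    by (rule content_cbox_cart) (use ne in blast)
  have fi: "?hi $ i - ?lo $ i = real n / real k" for i
  proof -
    have "?hi $ i - ?lo $ i = of_int (g i) * real n / real k - (of_int (g i) - 1) * real n / real k" by simp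
    also have "\<dots> = (of_int (g i) * real n - (of_int (g i) - 1) * real n) / real k" by (rule diff_divide_distrib[symmetric])
    also have "\<dots> = real n / real k" by (simp add: algebra_simps)
    finally show ?thesis .
  qed
  have "(\<Prod>i\<in>UNIV. ?hi $ i - ?lo $ i) = (\<Prod>i\<in>(UNIV::'d set). real n / real k)"
    by (simp only: fi)
  then have m4: "(\<Prod>i\<in>UNIV. ?hi $ i - ?lo $ i) = (real n / real k) ^ CARD('d)" by simp
  have le: "(of_int h - 1) * T / real k \<le> of_int h * T / real k"
    using assms by (intro divide_right_mono mult_right_mono) auto
  have "measure lborel (cbox ((of_int h - 1) * T / real k) (of_int h * T / real k)) = of_int h * T / real k - (of_int h - 1) * T / real k"
    unfolding cbox_interval by (rule content_real[OF le])
  also have "\<dots> = (of_int h * T - (of_int h - 1) * T) / real k" by (rule diff_divide_distrib[symmetric])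
  also have "\<dots> = T / real k" by (simp add: algebra_simps)
  finally have m5: "measure lborel (cbox ((of_int h - 1) * T / real k) (of_int h * T / real k)) = T / real k" .
  have "measure lborel (cell b n T k g h) \<le> measure lborel (cbox ?lo ?hi) * measure lborel (cbox ((of_int h - 1) * T / real k) (of_int h * T / real k))"
    using m1 m2 by simp
  then show ?thesis by (simp only: m3 m4 m5)
qed

lemma ceil_cell:
  fixes x lo w :: real and k :: nat
  assumes "0 < w" "0 < k" "lo < x" "x \<le> lo + w"
  defines "g \<equiv> \<lceil>real k * (x - lo) / w\<rceil>"
  shows "1 \<le> g" "g \<le> int k" "lo + (of_int g - 1) * w / real k < x" "x \<le> lo + of_int g * w / real k"
proof -
  define z where "z = real k * (x - lo) / w"
  have z0: "0 < z" unfolding z_def using assms by simp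
  have zk: "z \<le> real k"
  proof -
    have "real k * (x - lo) \<le> real k * w" using assms by (intro mult_left_mono) auto
    then show ?thesis unfolding z_def using assms by (simp add: divide_le_eq)
  qed
  have gz: "of_int g - 1 < z" "z \<le> of_int g" unfolding g_def z_def[symmetric] by linarith+
  show "1 \<le> g" using z0 gz by linarith
  show "g \<le> int k" unfolding g_def z_def[symmetric] using zk by (simp add: ceiling_le_iff)
  have kw: "real k > 0" "w > 0" using assms by auto
  have "(of_int g - 1) * w / real k < x - lo"
  proof -
    have "(of_int g - 1) * w < z * w" using gz(1) kw by (intro mult_strict_right_mono) auto
    also have "z * w = real k * (x - lo)" unfolding z_def using kw by simp
    finally show ?thesis using kw by (simp add: field_simps)
  qed
  then show "lo + (of_int g - 1) * w / real k < x" by simp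
  have "x - lo \<le> of_int g * w / real k"
  proof -
    have "real k * (x - lo) = z * w" unfolding z_def using kw by simp
    also have "\<dots> \<le> of_int g * w" using gz(2) kw by (intro mult_right_mono) auto
    finally show ?thesis using kw by (simp add: field_simps)
  qed
  then show "x \<le> lo + of_int g * w / real k" by simp
qed


definition U :: "real^'d \<Rightarrow> nat \<Rightarrow> real \<Rightarrow> nat \<Rightarrow> ('d \<Rightarrow> nat \<Rightarrow> int) \<Rightarrow> (nat \<Rightarrow> int) \<Rightarrow> ((real^'d) \<times> real) set" where
  "U b n T k g h = (\<Union>j<k. cell b n T k (\<lambda>i. g i j) (h j))"

lemma U_borel: "U b n T k g h \<in> sets borel"
  unfolding U_def by (intro sets.finite_UN) (auto simp: cell_borel)

lemma U_bounded: "bounded (U b n T k g h)"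
  unfolding U_def by (intro bounded_UN) (auto simp: cell_bounded)

lemma U_pos: "h \<in> Mon k \<Longrightarrow> T \<ge> 0 \<Longrightarrow> U b n T k g h \<subseteq> UNIV \<times> {0<..}"
  unfolding U_def Mon_def using cell_pos by blast

lemma U_measure:
  fixes b :: "real^'d"
  assumes "k > 0" "T \<ge> 0"
  shows "measure lborel (U b n T k g h) \<le> real k * ((real n / real k) ^ CARD('d) * (T / real k))"
proof -
  have "measure lborel (U b n T k g h) \<le> (\<Sum>j<k. measure lborel (cell b n T k (\<lambda>i. g i j) (h j)))"
    unfolding U_def by (rule measure_UNION_le) (auto simp: cell_borel)
  also have "\<dots> \<le> (\<Sum>j<k. (real n / real k) ^ CARD('d) * (T / real k))"
    by (intro sum_mono cell_measure assms)
  also have "\<dots> = real k * ((real n / real k) ^ CARD('d) * (T / real k))" by simp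
  finally show ?thesis .
qed

lemma chain_cells:
  fixes b :: "real^'d" and n k :: nat
  assumes n: "n > 0" and k: "k > 0" and T: "T > 0"
    and lf: "\<forall>B. bounded B \<longrightarrow> finite (Pw \<inter> B)"
    and H: "ereal (real k) \<le> Hlpp Pw (beta b n) b T"
  shows "\<exists>g h. g \<in> PiE UNIV (\<lambda>_. Mon k) \<and> h \<in> Mon k \<and> finite (Pw \<inter> U b n T k g h) \<and> k \<le> card (Pw \<inter> U b n T k g h)"
proof -
  have fin: "finite (Pw \<inter> reg (beta b n) b T)" by (rule lf[rule_format, OF reg_bounded])
  obtain C where C: "finite C" "strict_chain C" "C \<subseteq> Pw \<inter> reg (beta b n) b T"
    and HC: "Hlpp Pw (beta b n) b T = ereal (real (card C))"
    using Hlpp_attained[OF fin] by blast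
  have kC: "k \<le> card C" using H HC by simp
  have injs: "inj_on snd C"
  proof (rule inj_onI)
    fix p q assume "p \<in> C" "q \<in> C" "snd p = snd q"
    then show "p = q" using C(2) unfolding strict_chain_def by force
  qed
  define Ls where "Ls = sorted_list_of_set (snd ` C)"
  have lenL: "length Ls = card C" unfolding Ls_def using injs C(1) by (simp add: card_image)
  have setL: "set Ls = snd ` C" unfolding Ls_def using C(1) by simp
  have sortL: "sorted_wrt (<) Ls" unfolding Ls_def by (rule strict_sorted_list_of_set)
  define p where "p j = inv_into C snd (Ls ! j)" for j
  have pC: "p j \<in> C" and psnd: "snd (p j) = Ls ! j" if "j < k" for j
  proof -
    have "Ls ! j \<in> snd ` C" using that kC lenL setL nth_mem by (metis less_le_trans)
    then show "p j \<in> C" "snd (p j) = Ls ! j" unfolding p_def by (auto intro: inv_into_into f_inv_into_f)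
  qed
  have pless: "snd (p j) < snd (p j')" if "j < j'" "j' < k" for j j'
    using sorted_wrt_nth_less[OF sortL that(1)] that kC lenL psnd by auto
  have pvlt: "vlt (fst (p j)) (fst (p j'))" if "j < j'" "j' < k" for j j'
  proof -
    have "p j \<noteq> p j'" using pless[OF that] by auto
    then show ?thesis using C(2) pC[of j] pC[of j'] pless[OF that] that unfolding strict_chain_def by force
  qed
  have preg: "p j \<in> reg (beta b n) b T" if "j < k" for j using pC[OF that] C(3) by blast
  have pbounds: "b$i - real n < fst (p j) $ i" "fst (p j) $ i \<le> b$i - real n + real n"
    "0 < snd (p j)" "snd (p j) \<le> 0 + T" if "j < k" for j i
    using preg[OF that] unfolding reg_def vlt_def vle_def beta_def by (auto simp: case_prod_beta)
  define g where "g i j = (if j < k then \<lceil>real k * (fst (p j) $ i - (b$i - real n)) / real n\<rceil> else undefined)" for i j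
  define h where "h j = (if j < k then \<lceil>real k * (snd (p j) - 0) / T\<rceil> else undefined)" for j
  have nr: "0 < real n" using n by simp
  note cg = ceil_cell[OF nr k pbounds(1,2)]
  note ch = ceil_cell[OF T k pbounds(3,4)]
  have gM: "g i \<in> Mon k" for i
    unfolding Mon_def mem_Collect_eq
  proof (intro conjI allI impI)
    fix j assume j: "j < k"
    show "1 \<le> g i j" "g i j \<le> int k" using cg[OF j] j unfolding g_def by auto
  next
    fix j j' assume jj: "j \<le> j' \<and> j' < k"
    show "g i j \<le> g i j'"
    proof (cases "j = j'")
      case False
      then have "fst (p j) $ i < fst (p j') $ i" using pvlt[of j j'] jj unfolding vlt_def by auto
      then show ?thesis unfolding g_def using jj nr k
        by (auto intro!: ceiling_mono divide_right_mono mult_left_mono)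
    qed simp
  next
    fix j assume "k \<le> j" then show "g i j = undefined" unfolding g_def by simp
  qed
  have hM: "h \<in> Mon k"
    unfolding Mon_def mem_Collect_eq
  proof (intro conjI allI impI)
    fix j assume j: "j < k"
    show "1 \<le> h j" "h j \<le> int k" using ch[OF j] j unfolding h_def by auto
  next
    fix j j' assume jj: "j \<le> j' \<and> j' < k"
    show "h j \<le> h j'"
    proof (cases "j = j'")
      case False
      then have "snd (p j) < snd (p j')" using pless[of j j'] jj by auto
      then show ?thesis unfolding h_def using jj T k
        by (auto intro!: ceiling_mono divide_right_mono mult_left_mono)
    qed simp
  next
    fix j assume "k \<le> j" then show "h j = undefined" unfolding h_def by simp
  qed
  have pcell: "p j \<in> cell b n T k (\<lambda>i. g i j) (h j)" if j: "j < k" for j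
  proof -
    have "b$i - real n + (of_int (g i j) - 1) * real n / real k < fst (p j) $ i \<and>
        fst (p j) $ i \<le> b$i - real n + of_int (g i j) * real n / real k" for i
      using cg[OF j, of i] j unfolding g_def by simp
    moreover have "(of_int (h j) - 1) * T / real k < snd (p j) \<and> snd (p j) \<le> of_int (h j) * T / real k"
      using ch[OF j] j unfolding h_def by simp
    moreover obtain \<eta> s where ps: "p j = (\<eta>, s)" by (cases "p j")
    ultimately show ?thesis unfolding cell_def by simp
  qed
  have sub: "p ` {..<k} \<subseteq> Pw \<inter> U b n T k g h"
    using pcell pC C(3) unfolding U_def by blast
  have injp: "inj_on p {..<k}"
  proof (rule inj_onI)
    fix j j' assume "j \<in> {..<k}" "j' \<in> {..<k}" "p j = p j'"
    show "j = j'"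
    proof (rule ccontr)
      assume "j \<noteq> j'"
      then consider "j < j'" | "j' < j" by linarith
      then show False
      proof cases
        case 1 then show False using pless[of j j'] \<open>p j = p j'\<close> \<open>j' \<in> {..<k}\<close> by simp
      next
        case 2 then show False using pless[of j' j] \<open>p j = p j'\<close> \<open>j \<in> {..<k}\<close> by simp
      qed
    qed
  qed
  have finU: "finite (Pw \<inter> U b n T k g h)" by (rule lf[rule_format, OF U_bounded])
  have "k = card (p ` {..<k})" using injp by (simp add: card_image)
  also have "\<dots> \<le> card (Pw \<inter> U b n T k g h)" using sub finU by (rule card_mono[rotated])
  finally show ?thesis using gM hM finU by auto
qed

lemma pp_prob: "poisson_pp M P \<Longrightarrow> prob_space M"
  unfolding poisson_pp_def by (elim conjE)

lemma pp_lf: "poisson_pp M P \<Longrightarrow> \<omega> \<in> space M \<Longrightarrow> \<forall>B. bounded B \<longrightarrow> finite (P \<omega> \<inter> B)"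
proof -
  assume "poisson_pp M P" "\<omega> \<in> space M"
  then have "\<forall>\<omega>\<in>space M. P \<omega> \<subseteq> UNIV \<times> {0<..} \<and> (\<forall>B. bounded B \<longrightarrow> finite (P \<omega> \<inter> B))"
    unfolding poisson_pp_def by (elim conjE)
  then show ?thesis using \<open>\<omega> \<in> space M\<close> by (elim ballE conjE) auto
qed

lemma pp_B: "poisson_pp M P \<Longrightarrow> B \<in> sets borel \<Longrightarrow> bounded B \<Longrightarrow> B \<subseteq> UNIV \<times> {0<..} \<Longrightarrow>
   (\<lambda>\<omega>. card (P \<omega> \<inter> B)) \<in> measurable M (count_space UNIV) \<and>
        (\<forall>k. measure M {\<omega>\<in>space M. card (P \<omega> \<inter> B) = k}
              = (measure lborel B) ^ k / fact k * exp (- measure lborel B))"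
proof -
  assume a: "poisson_pp M P" "B \<in> sets borel" "bounded B" "B \<subseteq> UNIV \<times> {0<..}"
  then have "\<forall>B. B \<in> sets borel \<and> bounded B \<and> B \<subseteq> UNIV \<times> {0<..} \<longrightarrow>
        (\<lambda>\<omega>. card (P \<omega> \<inter> B)) \<in> measurable M (count_space UNIV) \<and>
        (\<forall>k. measure M {\<omega>\<in>space M. card (P \<omega> \<inter> B) = k}
              = (measure lborel B) ^ k / fact k * exp (- measure lborel B))"
    unfolding poisson_pp_def by (elim conjE)
  then show ?thesis using a by (elim allE[of _ B] impE) auto
qed

definition Fam :: "nat \<Rightarrow> (('d::finite \<Rightarrow> nat \<Rightarrow> int) \<times> (nat \<Rightarrow> int)) set" where
  "Fam k = PiE UNIV (\<lambda>_. Mon k) \<times> Mon k"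

lemma Fam_finite: "finite (Fam k)"
  unfolding Fam_def using Mon_finite by (intro finite_cartesian_product finite_PiE) auto

lemma Fam_card: "card (Fam k :: (('d::finite \<Rightarrow> nat \<Rightarrow> int) \<times> (nat \<Rightarrow> int)) set) \<le> 4 ^ (k * (CARD('d) + 1))"
proof -
  have "card (Fam k :: (('d \<Rightarrow> nat \<Rightarrow> int) \<times> (nat \<Rightarrow> int)) set) = card (Mon k) ^ CARD('d) * card (Mon k)"
    unfolding Fam_def by (simp add: card_cartesian_product card_PiE)
  also have "\<dots> \<le> (4 ^ k) ^ CARD('d) * 4 ^ k"
    using Mon_card[of k] by (intro mult_mono power_mono) auto
  also have "\<dots> = 4 ^ (k * (CARD('d) + 1))" by (simp add: power_mult[symmetric] power_add algebra_simps)
  finally show ?thesis .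
qed

definition Aev :: "'a measure \<Rightarrow> ('a \<Rightarrow> ((real^'d) \<times> real) set) \<Rightarrow> real^'d \<Rightarrow> nat \<Rightarrow> real \<Rightarrow> nat \<Rightarrow> 'a set" where
  "Aev M P b n T k = (\<Union>F\<in>Fam k. {\<omega>\<in>space M. k \<le> card (P \<omega> \<inter> U b n T k (fst F) (snd F))})"

lemma card_event:
  assumes pp: "poisson_pp M P" and B: "B \<in> sets borel" "bounded B" "B \<subseteq> UNIV \<times> {0<..}"
  shows "{\<omega>\<in>space M. k \<le> card (P \<omega> \<inter> B)} \<in> sets M"
proof -
  have Xm: "(\<lambda>\<omega>. card (P \<omega> \<inter> B)) \<in> measurable M (count_space UNIV)"
    using pp_B[OF pp B] by (elim conjE)
  have "(\<lambda>\<omega>. card (P \<omega> \<inter> B)) -` {k..} \<inter> space M \<in> sets M" using Xm by (rule measurable_sets) simp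
  moreover have "(\<lambda>\<omega>. card (P \<omega> \<inter> B)) -` {k..} \<inter> space M = {\<omega>\<in>space M. k \<le> card (P \<omega> \<inter> B)}" by auto
  ultimately show ?thesis by simp
qed

lemma Fam_U:
  assumes "F \<in> Fam k" "T \<ge> 0"
  shows "U b n T k (fst F) (snd F) \<in> sets borel" "bounded (U b n T k (fst F) (snd F))"
    "U b n T k (fst F) (snd F) \<subseteq> UNIV \<times> {0<..}"
proof -
  have "snd F \<in> Mon k" using assms(1) unfolding Fam_def by auto
  then show "U b n T k (fst F) (snd F) \<subseteq> UNIV \<times> {0<..}" using U_pos assms(2) by blast
qed (auto simp: U_borel U_bounded)

lemma Aev_sets:
  assumes pp: "poisson_pp M P" and T: "T \<ge> 0"
  shows "Aev M P b n T k \<in> sets M"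
  unfolding Aev_def
  by (intro sets.finite_UN Fam_finite ballI card_event[OF pp] Fam_U[OF _ T])

lemma Aev_prob:
  fixes b :: "real^'d"
  assumes pp: "poisson_pp M P" and k: "k > 0" and T: "T \<ge> 0"
  shows "measure M (Aev M P b n T k) \<le> 4 ^ (k * (CARD('d) + 1)) * (real k * ((real n / real k) ^ CARD('d) * (T / real k))) ^ k / fact k"
proof -
  let ?lam = "real k * ((real n / real k) ^ CARD('d) * (T / real k))"
  have "measure M (Aev M P b n T k) \<le> (\<Sum>F\<in>(Fam k :: (('d \<Rightarrow> nat \<Rightarrow> int) \<times> (nat \<Rightarrow> int)) set). measure M {\<omega>\<in>space M. k \<le> card (P \<omega> \<inter> U b n T k (fst F) (snd F))})"
    unfolding Aev_def by (intro measure_UNION_le Fam_finite card_event[OF pp] Fam_U[OF _ T])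
  also have "\<dots> \<le> (\<Sum>F\<in>(Fam k :: (('d \<Rightarrow> nat \<Rightarrow> int) \<times> (nat \<Rightarrow> int)) set). ?lam ^ k / fact k)"
  proof (rule sum_mono)
    fix F :: "('d \<Rightarrow> nat \<Rightarrow> int) \<times> (nat \<Rightarrow> int)" assume F: "F \<in> Fam k"
    have "measure M {\<omega>\<in>space M. k \<le> card (P \<omega> \<inter> U b n T k (fst F) (snd F))}
       \<le> (measure lborel (U b n T k (fst F) (snd F))) ^ k / fact k"
      by (intro poisson_tail[OF pp] Fam_U[OF F T])
    also have "\<dots> \<le> ?lam ^ k / fact k"
      by (intro divide_right_mono power_mono U_measure k T) auto
    finally show "measure M {\<omega>\<in>space M. k \<le> card (P \<omega> \<inter> U b n T k (fst F) (snd F))} \<le> ?lam ^ k / fact k" .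
  qed
  also have "\<dots> = real (card (Fam k :: (('d \<Rightarrow> nat \<Rightarrow> int) \<times> (nat \<Rightarrow> int)) set)) * (?lam ^ k / fact k)" by simp
  also have "\<dots> \<le> 4 ^ (k * (CARD('d) + 1)) * (?lam ^ k / fact k)"
  proof (rule mult_right_mono)
    have "real (card (Fam k :: (('d \<Rightarrow> nat \<Rightarrow> int) \<times> (nat \<Rightarrow> int)) set)) \<le> real (4 ^ (k * (CARD('d) + 1)))"
      using Fam_card[where 'd='d, of k] by linarith
    then show "real (card (Fam k :: (('d \<Rightarrow> nat \<Rightarrow> int) \<times> (nat \<Rightarrow> int)) set)) \<le> 4 ^ (k * (CARD('d) + 1))" by simp
    show "0 \<le> ?lam ^ k / fact k" using T by simp
  qed
  finally show ?thesis by simp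
qed

lemma Aev_cover:
  fixes b :: "real^'d"
  assumes pp: "poisson_pp M P" and \<omega>: "\<omega> \<in> space M" and n: "n > 0" and k: "k > 0" and T: "T > 0"
    and H: "ereal (real k) \<le> Hlpp (P \<omega>) (beta b n) b T"
  shows "\<omega> \<in> Aev M P b n T k"
proof -
  have lf: "\<forall>B. bounded B \<longrightarrow> finite (P \<omega> \<inter> B)" by (rule pp_lf[OF pp \<omega>])
  obtain g h where gh: "g \<in> PiE UNIV (\<lambda>_. Mon k)" "h \<in> Mon k" "k \<le> card (P \<omega> \<inter> U b n T k g h)"
    using chain_cells[OF n k T lf H] by blast
  then have "(g, h) \<in> Fam k" unfolding Fam_def by simp
  then show ?thesis unfolding Aev_def using gh(3) \<omega> by force
qed

lemma pow_fact_le_exp: "0 \<le> x \<Longrightarrow> x ^ k / fact k \<le> exp (x::real)"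
proof -
  assume x: "0 \<le> x"
  obtain t where t: "exp x = (\<Sum>m<Suc k. x^m / fact m) + exp t / fact (Suc k) * x ^ (Suc k)"
    using Maclaurin_exp_le[of x "Suc k"] by blast
  have "x^k / fact k \<le> (\<Sum>m<Suc k. x^m / fact m)" by (rule member_le_sum) (auto simp: x)
  moreover have "0 \<le> exp t / fact (Suc k) * x ^ (Suc k)" using x by simp
  ultimately show ?thesis using t by linarith
qed

lemma prob_num:
  fixes n k dd :: nat and T :: real
  assumes k: "k > 0" and T: "T \<ge> 0"
  shows "4 ^ (k * (dd + 1)) * (real k * ((real n / real k) ^ dd * (T / real k))) ^ k / fact k
     \<le> (4 ^ (dd + 1) * exp 1 * (real n ^ dd * T / real k ^ (dd + 1))) ^ k"
proof -
  define lam where "lam = real k * ((real n / real k) ^ dd * (T / real k))"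
  define q where "q = real n ^ dd * T / real k ^ (dd + 1)"
  have kr: "real k > 0" using k by simp
  have lamq: "lam = real k * q" unfolding lam_def q_def using kr by (simp add: power_divide field_simps)
  have q0: "q \<ge> 0" unfolding q_def using T by simp
  have "lam ^ k / fact k = q ^ k * (real k ^ k / fact k)" unfolding lamq by (simp add: power_mult_distrib)
  also have "\<dots> \<le> q ^ k * exp (real k)" using q0 by (intro mult_left_mono pow_fact_le_exp) auto
  also have "exp (real k) = exp 1 ^ k" by (simp add: exp_of_nat_mult[symmetric])
  finally have l1: "lam ^ k / fact k \<le> q ^ k * exp 1 ^ k" .
  have p4: "(4::real) ^ (k * (dd + 1)) = (4 ^ (dd + 1)) ^ k"
    by (subst mult.commute) (rule power_mult)
  have "4 ^ (k * (dd + 1)) * lam ^ k / fact k = (4 ^ (dd + 1)) ^ k * (lam ^ k / fact k)"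
    unfolding p4 by simp
  also have "\<dots> \<le> (4 ^ (dd + 1)) ^ k * (q ^ k * exp 1 ^ k)" using l1 by (intro mult_left_mono) auto
  also have "\<dots> = (4 ^ (dd + 1) * exp 1 * q) ^ k" by (simp add: power_mult_distrib)
  finally show ?thesis unfolding lam_def q_def .
qed


lemma half_pow_bound:
  fixes k n :: nat
  assumes kn: "real k \<ge> sqrt (real n)" and n1: "n \<ge> 1"
  shows "(1/2::real) ^ k \<le> (24 / (ln 2) ^ 4) * (1 / real n ^ 2)"
proof -
  have False: "n \<noteq> 0" using n1 by simp
  have l2: "ln (2::real) > 0" by simp
  have x0: "0 \<le> real k * ln 2" using l2 by simp
  have "(real k * ln 2) ^ 4 / fact 4 \<le> exp (real k * ln 2)" by (rule pow_fact_le_exp[OF x0])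
  also have "exp (real k * ln 2) = 2 ^ k"
    by (simp add: exp_of_nat_mult)
  finally have e: "(real k * ln 2) ^ 4 / 24 \<le> 2 ^ k" by (simp add: fact_numeral)
  have "sqrt (real n) ^ 4 = (sqrt (real n) ^ 2) ^ 2" by (simp only: power_mult[symmetric]) simp
  then have "real n ^ 2 = sqrt (real n) ^ 4" by simp
  also have "\<dots> \<le> real k ^ 4" using kn by (intro power_mono) auto
  finally have nk: "real n ^ 2 \<le> real k ^ 4" .
  have npos: "real n ^ 2 > 0" using False by simp
  have "(ln 2) ^ 4 * real n ^ 2 / 24 \<le> (ln 2) ^ 4 * real k ^ 4 / 24"
    using nk by (intro divide_right_mono mult_left_mono) auto
  also have "\<dots> = (real k * ln 2) ^ 4 / 24" by (simp add: power_mult_distrib)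
  also have "\<dots> \<le> 2 ^ k" by (rule e)
  finally have le: "(ln 2) ^ 4 * real n ^ 2 / 24 \<le> 2 ^ k" .
  have pos: "0 < (ln 2) ^ 4 * real n ^ 2 / 24" using npos l2 by simp
  have "(1/2::real) ^ k = 1 / 2 ^ k" by (simp add: power_divide)
  also have "\<dots> \<le> 1 / ((ln 2) ^ 4 * real n ^ 2 / 24)" using le pos by (intro divide_left_mono) auto
  also have "\<dots> = (24 / (ln 2) ^ 4) * (1 / real n ^ 2)" by simp
  finally show ?thesis .
qed

theorem corollary7p6:
  fixes M :: "'a measure" and P :: "'a \<Rightarrow> ((real^'d) \<times> real) set"
    and \<sigma> :: "real^'d \<Rightarrow> ereal" and c :: "real^'d" and L T :: real
  assumes "CARD('d) \<ge> 2"
    and "poisson_pp M P"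
    and "\<sigma> \<in> StateSpace"
    and "L \<ge> 0"
    and "0 < T"
  shows "\<exists>R :: 'a \<Rightarrow> real. R \<in> borel_measurable M \<and>
           (AE \<omega> in M. 0 < R \<omega> \<and>
              (\<forall>x t. (\<forall>i. c$i \<le> x$i \<and> x$i \<le> c$i + L) \<and> 0 \<le> t \<and> t \<le> T \<longrightarrow>
                 sigma_proc \<sigma> (P \<omega>) x t = sigma_trunc (R \<omega>) \<sigma> (P \<omega>) x t))"
proof -
  note pp = assms(2) and sig = assms(3) and L = assms(4) and T = assms(5)
  interpret prob_space M by (rule pp_prob[OF pp])
  define d where "d = CARD('d)"
  define D where "D = d + 1"
  define a where "a = real d / (real d + 1)"
  have a0: "0 < a" "a \<le> 1" unfolding a_def d_def by auto
  have ahalf: "a \<ge> 1/2" unfolding a_def using assms(1) unfolding d_def by (simp add: field_simps)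
  have aD: "a * real D = real d"
  proof -
    have "real d + 1 > 0" by simp
    then show ?thesis unfolding a_def D_def by (simp add: field_simps)
  qed
  define b where "b = upc c L"
  define C0 where "C0 = 2 * 4 ^ D * exp 1 * T"
  have C0: "C0 > 0" unfolding C0_def using T by simp
  define Cst where "Cst = max 1 (C0 powr (1 / real D))"
  have Cst1: "Cst \<ge> 1" unfolding Cst_def by simp
  have CstD: "Cst ^ D \<ge> C0"
  proof -
    have "(C0 powr (1 / real D)) ^ D = (C0 powr (1 / real D)) powr (real D)"
      using C0 by (simp add: powr_realpow)
    also have "\<dots> = C0 powr (1 / real D * real D)" by (rule powr_powr)
    also have "\<dots> = C0" unfolding D_def using C0 by simp
    finally have "C0 = (C0 powr (1 / real D)) ^ D" by simp
    also have "\<dots> \<le> Cst ^ D" unfolding Cst_def by (intro power_mono) auto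
    finally show ?thesis .
  qed
  define kk where "kk n = nat \<lceil>Cst * real n powr a\<rceil>" for n
  have kk_ge: "real (kk n) \<ge> Cst * real n powr a" for n unfolding kk_def by linarith
  have kk_le: "real (kk n) \<le> Cst * real n powr a + 1" for n
  proof -
    have "Cst * real n powr a \<ge> 0" using Cst1 by simp
    then show ?thesis unfolding kk_def by linarith
  qed
  have kk_sqrt: "real (kk n) \<ge> sqrt (real n)" if "n \<ge> 1" for n
  proof -
    have "sqrt (real n) = real n powr (1/2)" by (simp add: powr_half_sqrt)
    also have "\<dots> \<le> real n powr a" using that ahalf by (intro powr_mono) auto
    also have "\<dots> \<le> Cst * real n powr a" using mult_right_mono[OF Cst1, of "real n powr a"] by simp
    finally show ?thesis using kk_ge[of n] by linarith
  qed
  have kk_pos: "kk n > 0" if "n \<ge> 1" for n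
  proof -
    have "sqrt (real n) \<ge> 1" using that by simp
    then show ?thesis using kk_sqrt[OF that] by linarith
  qed
  define A where "A n = Aev M P b n T (kk n)" for n
  have A_sets[measurable]: "A n \<in> sets M" for n unfolding A_def using Aev_sets[OF pp] T by simp
  have A_prob: "measure M (A n) \<le> (24 / (ln 2) ^ 4) * (1 / real n ^ 2)" if n: "n \<ge> 1" for n
  proof -
    define k where "k = kk n"
    have k: "k > 0" unfolding k_def by (rule kk_pos[OF n])
    define q where "q = real n ^ d * T / real k ^ (d + 1)"
    have q0: "q \<ge> 0" unfolding q_def using T by simp
    have kD: "real k ^ D \<ge> C0 * real n ^ d"
    proof -
      have nd: "real n ^ d = (real n powr a) ^ D"
      proof -
        have np: "real n > 0" using n by simp
        have "(real n powr a) ^ D = (real n powr a) powr (real D)" using np by (simp add: powr_realpow)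
        also have "\<dots> = real n powr (a * real D)" by (rule powr_powr)
        also have "\<dots> = real n ^ d" unfolding aD using np by (simp add: powr_realpow)
        finally show ?thesis by simp
      qed
      have "C0 * real n ^ d \<le> Cst ^ D * real n ^ d" using CstD by (intro mult_right_mono) auto
      also have "Cst ^ D * real n ^ d = (Cst * real n powr a) ^ D" unfolding nd by (simp add: power_mult_distrib)
      also have "\<dots> \<le> real k ^ D" unfolding k_def using kk_ge[of n] Cst1 by (intro power_mono) auto
      finally show ?thesis .
    qed
    have qle: "4 ^ D * exp 1 * q \<le> 1/2"
    proof -
      have npos: "real n ^ d > 0" using n by simp
      have kpos: "real k ^ D > 0" using k by simp
      have "4 ^ D * exp 1 * q = 4 ^ D * exp 1 * T * real n ^ d / real k ^ D"
        unfolding q_def D_def by simp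
      also have "\<dots> \<le> 4 ^ D * exp 1 * T * real n ^ d / (C0 * real n ^ d)"
        using kD kpos npos C0 T by (intro divide_left_mono mult_nonneg_nonneg mult_pos_pos) auto
      also have "\<dots> = 1/2" unfolding C0_def using npos T by (simp add: field_simps)
      finally show ?thesis .
    qed
    have "measure M (A n) \<le> 4 ^ (k * (d + 1)) * (real k * ((real n / real k) ^ d * (T / real k))) ^ k / fact k"
      unfolding A_def k_def[symmetric] d_def using Aev_prob[OF pp k, of T b n] T by simp
    also have "\<dots> \<le> (4 ^ (d + 1) * exp 1 * q) ^ k" unfolding q_def using prob_num[OF k, of T d n] T by simp
    also have "\<dots> \<le> (1/2) ^ k" using qle q0 unfolding D_def by (intro power_mono) auto
    also have "\<dots> \<le> (24 / (ln 2) ^ 4) * (1 / real n ^ 2)" unfolding k_def by (rule half_pow_bound[OF kk_sqrt[OF n] n])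
    finally show ?thesis .
  qed
  have summ: "summable (\<lambda>n. measure M (A n))"
  proof (rule summable_comparison_test'[of _ 1])
    show "summable (\<lambda>n. (24 / (ln 2) ^ 4) * (1 / real n ^ 2))"
      using inverse_power_summable[of 2, where 'a=real] by (intro summable_mult) (simp add: inverse_eq_divide)
    fix n :: nat assume "n \<ge> 1"
    then show "norm (measure M (A n)) \<le> (24 / (ln 2) ^ 4) * (1 / real n ^ 2)" using A_prob by simp
  qed
  have BC: "AE \<omega> in M. eventually (\<lambda>n. \<omega> \<in> space M - A n) sequentially"
    by (rule borel_cantelli_AE1) (auto simp: summ less_top[symmetric] emeasure_finite)
  obtain R1 where R1: "R1 > 0" and R1main: "\<forall>Pw N0 R. (\<forall>B. bounded B \<longrightarrow> finite (Pw \<inter> B)) \<and>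
     (\<forall>n\<ge>N0. Hlpp Pw (beta (upc c L) n) (upc c L) T \<le> ereal (Cst * real n powr a + 1))
     \<and> R \<ge> R1 \<and> R \<ge> real N0 \<longrightarrow>
     (\<forall>x t. (\<forall>i. c$i \<le> x$i \<and> x$i \<le> c$i + L) \<and> 0 \<le> t \<and> t \<le> T \<longrightarrow>
                 sigma_proc \<sigma> Pw x t = sigma_trunc R \<sigma> Pw x t)"
    using det_main[OF sig L, of Cst c T] Cst1 unfolding a_def d_def by auto
  define Nw where "Nw \<omega> = (LEAST N. \<forall>n\<ge>N. \<omega> \<notin> A n)" for \<omega>
  define R where "R \<omega> = R1 + real (Nw \<omega>) + 1" for \<omega>
  have Nw_meas: "Nw \<in> measurable M (count_space UNIV)" unfolding Nw_def by measurable
  have R_meas: "R \<in> borel_measurable M" unfolding R_def using Nw_meas by measurable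
  show ?thesis
  proof (intro exI conjI)
    show "R \<in> borel_measurable M" by (rule R_meas)
    show "AE \<omega> in M. 0 < R \<omega> \<and>
              (\<forall>x t. (\<forall>i. c$i \<le> x$i \<and> x$i \<le> c$i + L) \<and> 0 \<le> t \<and> t \<le> T \<longrightarrow>
                 sigma_proc \<sigma> (P \<omega>) x t = sigma_trunc (R \<omega>) \<sigma> (P \<omega>) x t)"
      using BC
    proof (rule AE_mp[OF _ AE_I2], intro impI)
      fix \<omega> assume \<omega>: "\<omega> \<in> space M" and ev: "eventually (\<lambda>n. \<omega> \<in> space M - A n) sequentially"
      have ex: "\<exists>N. \<forall>n\<ge>N. \<omega> \<notin> A n" using ev unfolding eventually_sequentially by blast
      have Nw: "\<forall>n\<ge>Nw \<omega>. \<omega> \<notin> A n" unfolding Nw_def by (rule LeastI_ex[OF ex])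
      define N0 where "N0 = max (Nw \<omega>) 1"
      have HN: "\<forall>n\<ge>N0. Hlpp (P \<omega>) (beta (upc c L) n) (upc c L) T \<le> ereal (Cst * real n powr a + 1)"
      proof (intro allI impI)
        fix n assume n: "n \<ge> N0"
        then have n1: "n \<ge> 1" and nA: "\<omega> \<notin> A n" using Nw unfolding N0_def by auto
        have "\<not> ereal (real (kk n)) \<le> Hlpp (P \<omega>) (beta b n) b T"
        proof
          assume "ereal (real (kk n)) \<le> Hlpp (P \<omega>) (beta b n) b T"
          then have "\<omega> \<in> A n" unfolding A_def using Aev_cover[OF pp \<omega> _ kk_pos[OF n1] T] n1 by simp
          then show False using nA by simp
        qed
        then have "Hlpp (P \<omega>) (beta b n) b T \<le> ereal (real (kk n))" by simp
        also have "\<dots> \<le> ereal (Cst * real n powr a + 1)" using kk_le[of n] by simp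
        finally show "Hlpp (P \<omega>) (beta (upc c L) n) (upc c L) T \<le> ereal (Cst * real n powr a + 1)"
          unfolding b_def .
      qed
      have RR: "R \<omega> \<ge> R1" "R \<omega> \<ge> real N0" unfolding R_def N0_def using R1 by auto
      show "0 < R \<omega> \<and>
              (\<forall>x t. (\<forall>i. c$i \<le> x$i \<and> x$i \<le> c$i + L) \<and> 0 \<le> t \<and> t \<le> T \<longrightarrow>
                 sigma_proc \<sigma> (P \<omega>) x t = sigma_trunc (R \<omega>) \<sigma> (P \<omega>) x t)"
        using R1main pp_lf[OF pp \<omega>] HN RR R1 by auto
    qed
  qed
qed

end
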